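(* Introduce on $\mathbb R^2$ the coordinates $(\rho,\varphi)$ with $\varphi=2\pi t/T\in S^1$, $T=4\pi/f'(r_0)$, and $\rho\ge0$ defined by $\rho^2=4f(r)/f'(r_0)^2$, so that $\mathring g=\rho^2d\varphi^2+\frac{f'(r_0)^2}{f'(r(\rho))^2}d\rho^2+r(\rho)^2h_K$. Consider the one-parameter family $\mu\mapsto\mathring g_\mu$ of such metrics, written in the fixed coordinates $(\rho,\varphi,x)$ ($x\in N$), and the symmetric tensor $\frac{d\mathring g_\mu}{d\mu}$. Then $\frac{d\mathring g_\mu}{d\mu}\in L^2(M,\mathring g_\mu)$ if and only if $\frac{d}{d\mu}\big(f'(r_0)\big)=0$. This happens if and only if $K=1$ and $\mu=\mu_c:=\frac{n}{n+1}\big(\ell\sqrt{\tfrac{n-1}{n+1}}\big)^{n-1}$ (equivalently $r_0=\ell\sqrt{\frac{n-1}{n+1}}$); for $K\in\{0,-1\}$ the variation is never in $L^2$.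
   Context: Fix an integer $n\ge2$, constants $\ell>0$, $K\in\{-1,0,1\}$, $\mu\in\mathbb R$. Let $(N,h_K)$ be a closed $n$-dimensional Riemannian manifold of constant sectional curvature $K$. Set $f(r)=\frac{r^2}{\ell^2}+K-\frac{2\mu}{r^{n-1}}$. Assume $\mu>0$ if $K\in\{0,1\}$ and $\mu>\mu_{\min}:=-\frac{1}{n+1}\big(\frac{n+1}{\ell^2(n-1)}\big)^{\frac{1-n}{2}}$ if $K=-1$; then $f$ has a largest positive zero $r_0$ (depending on $\mu$), which is simple, and $f>0$, $f'>0$ on $(r_0,\infty)$. The Riemannian Kottler metric is $\mathring g=f(r)\,dt^2+f(r)^{-1}dr^2+r^2h_K$ on $M=\mathbb R^2\times N$, $r\in[r_0,\infty)$, $t$ periodic with period $4\pi/f'(r_0)$, $(r,t)$ polar-type coordinates on $\mathbb R^2$ centred at $r=r_0$. *)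

theory Defs
  imports "HOL-Analysis.Analysis"
begin

definition kf :: "nat \<Rightarrow> real \<Rightarrow> int \<Rightarrow> real \<Rightarrow> real \<Rightarrow> real" where
  "kf n l K mu r = r^2 / l^2 + real_of_int K - 2 * mu / r^(n-1)"

definition mu_min :: "nat \<Rightarrow> real \<Rightarrow> real" where
  "mu_min n l = - (1 / (real n + 1)) * ((real n + 1) / (l^2 * (real n - 1))) powr ((1 - real n) / 2)"

definition mu_crit :: "nat \<Rightarrow> real \<Rightarrow> real" where
  "mu_crit n l = (real n / (real n + 1)) * (l * sqrt ((real n - 1) / (real n + 1))) ^ (n - 1)"

definition admissible :: "nat \<Rightarrow> real \<Rightarrow> int \<Rightarrow> real \<Rightarrow> bool" where
  "admissible n l K mu \<longleftrightarrow>
     (K \<in> {0, 1} \<longrightarrow> mu > 0) \<and> (K = -1 \<longrightarrow> mu > mu_min n l)"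

definition kr0 :: "nat \<Rightarrow> real \<Rightarrow> int \<Rightarrow> real \<Rightarrow> real" where
  "kr0 n l K mu = (GREATEST r. r > 0 \<and> kf n l K mu r = 0)"

definition fp0 :: "nat \<Rightarrow> real \<Rightarrow> int \<Rightarrow> real \<Rightarrow> real" where
  "fp0 n l K mu = deriv (kf n l K mu) (kr0 n l K mu)"

definition krho :: "nat \<Rightarrow> real \<Rightarrow> int \<Rightarrow> real \<Rightarrow> real \<Rightarrow> real" where
  "krho n l K mu r = 2 * sqrt (kf n l K mu r) / fp0 n l K mu"

definition kr_of_rho :: "nat \<Rightarrow> real \<Rightarrow> int \<Rightarrow> real \<Rightarrow> real \<Rightarrow> real" where
  "kr_of_rho n l K mu rho = (THE r. r \<ge> kr0 n l K mu \<and> krho n l K mu r = rho)"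

text \<open>Metric in the fixed coordinates (rho, phi, x):
  g = rho^2 dphi^2 + A(rho) drho^2 + B(rho) h_K with
  A = f'(r0)^2 / f'(r(rho))^2 and B = r(rho)^2.\<close>
definition gA :: "nat \<Rightarrow> real \<Rightarrow> int \<Rightarrow> real \<Rightarrow> real \<Rightarrow> real" where
  "gA n l K mu rho = (fp0 n l K mu)^2 / (deriv (kf n l K mu) (kr_of_rho n l K mu rho))^2"

definition gB :: "nat \<Rightarrow> real \<Rightarrow> int \<Rightarrow> real \<Rightarrow> real \<Rightarrow> real" where
  "gB n l K mu rho = (kr_of_rho n l K mu rho)^2"

text \<open>The variation h = d g_mu / d mu (at fixed coordinates) has components
  h_phiphi = 0, h_rhorho = dA/dmu, h_N = (dB/dmu) h_K.
  Its pointwise squared norm w.r.t. g_mu is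
  |h|^2 = (h_rhorho / A)^2 + n (dB/dmu / B)^2,
  and the Riemannian volume density is rho sqrt(A) B^(n/2) drho dphi dvol_{h_K}.\<close>
definition var_norm_sq :: "nat \<Rightarrow> real \<Rightarrow> int \<Rightarrow> real \<Rightarrow> real \<Rightarrow> real" where
  "var_norm_sq n l K mu rho =
     (deriv (\<lambda>m. gA n l K m rho) mu / gA n l K mu rho)^2
     + real n * (deriv (\<lambda>m. gB n l K m rho) mu / gB n l K mu rho)^2"

definition vol_density :: "nat \<Rightarrow> real \<Rightarrow> int \<Rightarrow> real \<Rightarrow> real \<Rightarrow> real" where
  "vol_density n l K mu rho = rho * sqrt (gA n l K mu rho) * (kr_of_rho n l K mu rho) ^ n"

text \<open>d g_mu/d mu \<in> L^2(M, g_mu). After integrating out phi \<in> S^1 (factor 2 pi) and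
  x \<in> N (factor vol(N,h_K), finite and positive as N is closed), this is integrability of
  the nonnegative radial function |h|^2 * density over rho \<in> (0, \<infinity>).\<close>
definition variation_L2 :: "nat \<Rightarrow> real \<Rightarrow> int \<Rightarrow> real \<Rightarrow> bool" where
  "variation_L2 n l K mu \<longleftrightarrow>
     (\<lambda>rho. var_norm_sq n l K mu rho * vol_density n l K mu rho) integrable_on {0<..}"

end

theory Submission
  imports Defs
begin


definition hM :: "nat \<Rightarrow> real \<Rightarrow> int \<Rightarrow> real \<Rightarrow> real" where
 "hM n l K s = s^(n-1) * (s^2/l^2 + real_of_int K) / 2"
definition hMp :: "nat \<Rightarrow> real \<Rightarrow> int \<Rightarrow> real \<Rightarrow> real" where
 "hMp n l K s = s^(n-2) * ((real n + 1) * s^2 / l^2 + (real n - 1)*real_of_int K)/2"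
definition dk :: "nat \<Rightarrow> real \<Rightarrow> real \<Rightarrow> real \<Rightarrow> real" where
 "dk n l m r = 2*r/l^2 + 2*(real n - 1)*m/r^n"
definition FF :: "nat \<Rightarrow> real \<Rightarrow> int \<Rightarrow> real \<Rightarrow> real" where
 "FF n l K s = (real n + 1) * s / l^2 + (real n - 1)*real_of_int K * inverse s"
definition FFp :: "nat \<Rightarrow> real \<Rightarrow> int \<Rightarrow> real \<Rightarrow> real" where
 "FFp n l K s = (real n + 1) / l^2 - (real n - 1)*real_of_int K/s^2"
definition rstar :: "nat \<Rightarrow> real \<Rightarrow> int \<Rightarrow> real" where
 "rstar n l K = (if K = -1 then l * sqrt((real n - 1)/(real n + 1)) else 0)"
definition alow :: "nat \<Rightarrow> real \<Rightarrow> int \<Rightarrow> real" where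
 "alow n l K = (if K = -1 then mu_min n l else 0)"

lemma n_Suc2: "n \<ge> 2 \<Longrightarrow> \<exists>k. n = Suc (Suc k)"
  by (metis add_2_eq_Suc le_iff_add)

lemma kf_deriv:
  assumes "n \<ge> 2" "r > 0" "l > 0"
  shows "(kf n l K m has_real_derivative dk n l m r) (at r)"
proof -
  obtain k where n: "n = Suc (Suc k)" using n_Suc2 assms by blast
  show ?thesis unfolding kf_def [abs_def] dk_def n
    apply (insert assms, rule DERIV_cong)
     apply (rule derivative_eq_intros refl | simp)+
    apply (simp add: field_simps power2_eq_square eval_nat_numeral)
    done
qed

lemma hM_deriv:
  assumes "n \<ge> 2" "l > 0"
  shows "(hM n l K has_real_derivative hMp n l K s) (at s)"
proof -
  obtain k where n: "n = Suc (Suc k)" using n_Suc2 assms by blast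
  show ?thesis unfolding hM_def [abs_def] hMp_def n
    apply (insert assms, rule DERIV_cong)
     apply (rule derivative_eq_intros refl | simp)+
    apply (simp add: field_simps power2_eq_square eval_nat_numeral)
    done
qed
lemma Kcases: "K \<in> {-1,0,1::int} \<Longrightarrow> K = -1 \<or> K = 0 \<or> K = 1" by auto

lemma rstar_nonneg: "l > 0 \<Longrightarrow> n \<ge> 2 \<Longrightarrow> rstar n l K \<ge> 0"
  unfolding rstar_def by auto

lemma rstar_pos: "l > 0 \<Longrightarrow> n \<ge> 2 \<Longrightarrow> K = -1 \<Longrightarrow> rstar n l K > 0"
  unfolding rstar_def by (auto intro!: mult_pos_pos)

lemma rstar_sq: "l > 0 \<Longrightarrow> n \<ge> 2 \<Longrightarrow> K = -1 \<Longrightarrow> (rstar n l K)^2 = l^2 * ((real n - 1)/(real n + 1))"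
  unfolding rstar_def by (simp add: power_mult_distrib)

lemma quad_pos:
  assumes "n \<ge> 2" "l > 0" "K \<in> {-1,0,1}" "s > rstar n l K"
  shows "(real n + 1) * s^2 / l^2 + (real n - 1) * real_of_int K > 0"
proof -
  have s0: "s > 0" using assms rstar_nonneg[of l n K] by linarith
  consider "K = -1" | "K = 0" | "K = 1" using assms(3) by auto
  then show ?thesis
  proof cases
    case 1
    have "rstar n l K ^ 2 < s^2" using assms rstar_nonneg[of l n K]
      by (intro power_strict_mono) auto
    then have "l^2 * ((real n - 1)/(real n + 1)) < s^2" using rstar_sq[of l n K] assms 1 by simp
    then have "(real n - 1) < s^2 / l^2 * (real n + 1)" using assms by (simp add: field_simps)
    then show ?thesis using 1 by (simp add: field_simps)
  next
    case 2 then show ?thesis using s0 assms by simp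
  next
    case 3 then show ?thesis using s0 assms by (simp add: add_pos_nonneg)
  qed
qed

lemma hMp_pos:
  assumes "n \<ge> 2" "l > 0" "K \<in> {-1,0,1}" "s > rstar n l K"
  shows "hMp n l K s > 0"
proof -
  have s0: "s > 0" using assms rstar_nonneg[of l n K] by linarith
  show ?thesis unfolding hMp_def using quad_pos[OF assms] s0 by simp
qed

lemma hM_cont: "l > 0 \<Longrightarrow> continuous_on S (hM n l K)"
  unfolding hM_def[abs_def] by (intro continuous_intros) auto

lemma hM_mono:
  assumes "n \<ge> 2" "l > 0" "K \<in> {-1,0,1}" "rstar n l K \<le> a" "a < b"
  shows "hM n l K a < hM n l K b"
proof (rule DERIV_pos_imp_increasing_open[OF assms(5)])
  fix x assume "a < x" "x < b"
  then show "\<exists>y. (hM n l K has_real_derivative y) (at x) \<and> 0 < y"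
    using hM_deriv[OF assms(1,2)] hMp_pos[OF assms(1-3)] assms(4) by fastforce
qed (rule hM_cont[OF assms(2)])

lemma hM_rstar:
  assumes "n \<ge> 2" "l > 0" "K \<in> {-1,0,1}"
  shows "hM n l K (rstar n l K) = alow n l K"
proof (cases "K = -1")
  case False
  then show ?thesis using assms unfolding hM_def rstar_def alow_def by simp
next
  case True
  define r where "r = rstar n l K"
  have r0: "r > 0" using rstar_pos[OF assms(2,1) True] r_def by simp
  have r2: "r^2 = l^2 * ((real n - 1)/(real n + 1))" using rstar_sq[OF assms(2,1) True] r_def by simp
  have n1: "real n + 1 > 0" "real n - 1 > 0" using assms by auto
  have e: "r^2/l^2 + real_of_int K = -2/(real n + 1)"
    using r2 True n1 assms by (simp add: field_simps)
  have hr: "hM n l K r = - (r^(n-1)) / (real n + 1)"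
    unfolding hM_def e using n1 by (simp add: field_simps)
  have "(real n + 1) / (l^2 * (real n - 1)) = r powr (-2)"
    using r2 r0 n1 assms by (simp add: powr_minus powr_numeral field_simps)
  then have "((real n + 1) / (l^2 * (real n - 1))) powr ((1 - real n)/2) = r powr (-2 * ((1 - real n)/2))"
    by (simp add: powr_powr)
  also have "-2 * ((1 - real n)/2) = real (n - 1)" using assms by (simp add: of_nat_diff)
  also have "r powr (real (n - 1)) = r ^ (n - 1)" using r0 by (simp add: powr_realpow)
  finally show ?thesis unfolding alow_def mu_min_def using True hr r_def by simp
qed

lemma adm_iff:
  assumes "K \<in> {-1,0,1}"
  shows "admissible n l K mu \<longleftrightarrow> mu > alow n l K"
  using assms unfolding admissible_def alow_def by auto

lemma exists_root:
  assumes "n \<ge> 2" "l > 0" "K \<in> {-1,0,1}" "mu > alow n l K"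
  shows "\<exists>s > rstar n l K. hM n l K s = mu"
proof -
  define B where "B = max (max 1 (rstar n l K)) (l^2 * (2*\<bar>mu\<bar>+2))"
  have B1: "B \<ge> 1" and Br: "B \<ge> rstar n l K" and Bl: "B \<ge> l^2 * (2*\<bar>mu\<bar>+2)" unfolding B_def by auto
  have "B^2 \<ge> B" using B1 by (simp add: power2_eq_square)
  then have "B^2 / l^2 \<ge> 2*\<bar>mu\<bar>+2" using Bl assms(2) by (simp add: field_simps)
  then have q: "B^2 / l^2 + real_of_int K \<ge> 2*\<bar>mu\<bar>+1" using assms(3) by auto
  have "B^(n-1) \<ge> 1" using B1 by simp
  then have "B^(n-1) * (B^2 / l^2 + real_of_int K) \<ge> 1 * (2*\<bar>mu\<bar>+1)"
    using q by (intro mult_mono) auto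
  then have hB: "hM n l K B \<ge> mu" unfolding hM_def by auto
  have ha: "hM n l K (rstar n l K) \<le> mu" using hM_rstar[OF assms(1-3)] assms(4) by simp
  obtain s where s: "rstar n l K \<le> s" "s \<le> B" "hM n l K s = mu"
    using IVT'[of "hM n l K" "rstar n l K" mu B, OF ha hB Br hM_cont[OF assms(2)]] by blast
  have "s \<noteq> rstar n l K" using s(3) hM_rstar[OF assms(1-3)] assms(4) by auto
  then show ?thesis using s by (intro exI[of _ s]) auto
qed

lemma kf_zero_iff:
  assumes "r > 0" "l > 0"
  shows "kf n l K m r = 0 \<longleftrightarrow> hM n l K r = m"
  unfolding kf_def hM_def using assms by (auto simp: field_simps)

lemma kr0_char:
  assumes "n \<ge> 2" "l > 0" "K \<in> {-1,0,1}" "s > rstar n l K" "hM n l K s = mu"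
  shows "kr0 n l K mu = s"
  unfolding kr0_def
proof (rule Greatest_equality)
  have s0: "s > 0" using assms rstar_nonneg[of l n K] by linarith
  then show "0 < s \<and> kf n l K mu s = 0" using kf_zero_iff[of s l n K mu] assms by simp
  fix y assume y: "0 < y \<and> kf n l K mu y = 0"
  then have hy: "hM n l K y = mu" using kf_zero_iff[of y l n K mu] assms by simp
  show "y \<le> s"
  proof (rule ccontr)
    assume "\<not> y \<le> s"
    then have "hM n l K s < hM n l K y" using hM_mono[OF assms(1-3), of s y] assms by simp
    then show False using hy assms by simp
  qed
qed

lemma kr0_props:
  assumes "n \<ge> 2" "l > 0" "K \<in> {-1,0,1}" "mu > alow n l K"
  shows "kr0 n l K mu > rstar n l K" "hM n l K (kr0 n l K mu) = mu" "kr0 n l K mu > 0"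
proof -
  obtain s where s: "s > rstar n l K" "hM n l K s = mu" using exists_root[OF assms] by blast
  then have "kr0 n l K mu = s" using kr0_char[OF assms(1-3)] by blast
  then show "kr0 n l K mu > rstar n l K" "hM n l K (kr0 n l K mu) = mu" using s by auto
  then show "kr0 n l K mu > 0" using rstar_nonneg[of l n K] assms by linarith
qed

lemma dk_at_root:
  assumes "n \<ge> 2" "l > 0" "s > 0" "hM n l K s = m"
  shows "dk n l m s = FF n l K s"
proof -
  obtain k where n: "n = Suc (Suc k)" using n_Suc2 assms by blast
  show ?thesis using assms(2,3) unfolding dk_def FF_def assms(4)[symmetric] hM_def n
    by (simp add: field_simps power2_eq_square)
qed

lemma FF_pos:
  assumes "n \<ge> 2" "l > 0" "K \<in> {-1,0,1}" "s > rstar n l K"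
  shows "FF n l K s > 0"
proof -
  have s0: "s > 0" using assms rstar_nonneg[of l n K] by linarith
  have "FF n l K s = ((real n + 1) * s^2 / l^2 + (real n - 1) * real_of_int K) / s"
    unfolding FF_def using s0 by (simp add: field_simps power2_eq_square)
  then show ?thesis using quad_pos[OF assms] s0 by simp
qed

lemma fp0_eq:
  assumes "n \<ge> 2" "l > 0" "K \<in> {-1,0,1}" "mu > alow n l K"
  shows "fp0 n l K mu = FF n l K (kr0 n l K mu)" "fp0 n l K mu = dk n l mu (kr0 n l K mu)"
    "fp0 n l K mu > 0"
proof -
  note p = kr0_props[OF assms]
  have "fp0 n l K mu = dk n l mu (kr0 n l K mu)"
    unfolding fp0_def using kf_deriv[OF assms(1) p(3) assms(2)] by (rule DERIV_imp_deriv)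
  moreover have "dk n l mu (kr0 n l K mu) = FF n l K (kr0 n l K mu)"
    using dk_at_root[OF assms(1,2) p(3,2)] .
  ultimately show "fp0 n l K mu = FF n l K (kr0 n l K mu)" "fp0 n l K mu = dk n l mu (kr0 n l K mu)"
    by auto
  then show "fp0 n l K mu > 0" using FF_pos[OF assms(1-3) p(1)] by simp
qed

lemma hM_gt_alow:
  assumes "n \<ge> 2" "l > 0" "K \<in> {-1,0,1}" "z > rstar n l K"
  shows "hM n l K z > alow n l K"
  using hM_mono[OF assms(1-3) order_refl assms(4)] hM_rstar[OF assms(1-3)] by simp

lemma kr0_hM:
  assumes "n \<ge> 2" "l > 0" "K \<in> {-1,0,1}" "z > rstar n l K"
  shows "kr0 n l K (hM n l K z) = z"
  using kr0_char[OF assms(1-4) refl] .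

lemma kr0_deriv:
  assumes "n \<ge> 2" "l > 0" "K \<in> {-1,0,1}" "mu > alow n l K"
  shows "(kr0 n l K has_real_derivative inverse (hMp n l K (kr0 n l K mu))) (at mu)"
proof -
  note p = kr0_props[OF assms]
  define s where "s = kr0 n l K mu"
  define d where "d = (s - rstar n l K)/2"
  have d0: "d > 0" using p(1) unfolding d_def s_def by simp
  have "isCont (kr0 n l K) (hM n l K s)"
  proof (rule isCont_inverse_function[where f = "hM n l K" and g = "kr0 n l K" and x = s, OF d0])
    fix z assume "\<bar>z - s\<bar> \<le> d"
    then have "z \<ge> s - d" by (simp add: abs_le_iff)
    moreover have "s - d > rstar n l K" unfolding d_def s_def using p(1) by (simp add: field_simps)
    ultimately have z: "z > rstar n l K" by linarith
    show "kr0 n l K (hM n l K z) = z" using kr0_hM[OF assms(1-3) z] .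
  next
    fix z show "isCont (hM n l K) z" using hM_deriv[OF assms(1,2)] by (rule DERIV_isCont)
  qed
  then have cont: "isCont (kr0 n l K) mu" using p(2) s_def by simp
  show ?thesis
  proof (rule DERIV_inverse_function[where a = "alow n l K" and b = "mu + 1"])
    show "(hM n l K has_real_derivative hMp n l K (kr0 n l K mu)) (at (kr0 n l K mu))"
      using hM_deriv[OF assms(1,2)] .
    show "hMp n l K (kr0 n l K mu) \<noteq> 0" using hMp_pos[OF assms(1-3) p(1)] by simp
    show "alow n l K < mu" "mu < mu + 1" using assms by auto
    fix y assume "alow n l K < y" "y < mu + 1"
    then show "hM n l K (kr0 n l K y) = y" using kr0_props[OF assms(1-3)] by blast
  qed (rule cont)
qed

lemma FF_deriv:
  assumes "s > 0" "l > 0"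
  shows "(FF n l K has_real_derivative FFp n l K s) (at s)"
  unfolding FF_def[abs_def] FFp_def
  apply (insert assms, rule DERIV_cong)
   apply (rule derivative_eq_intros refl | simp)+
  apply (simp add: field_simps power2_eq_square eval_nat_numeral)
  done

lemma fp0_deriv:
  assumes "n \<ge> 2" "l > 0" "K \<in> {-1,0,1}" "mu > alow n l K"
  shows "(fp0 n l K has_real_derivative
           FFp n l K (kr0 n l K mu) * inverse (hMp n l K (kr0 n l K mu))) (at mu)"
proof -
  note p = kr0_props[OF assms]
  have "((FF n l K \<circ> kr0 n l K) has_real_derivative
           FFp n l K (kr0 n l K mu) * inverse (hMp n l K (kr0 n l K mu))) (at mu)"
    by (rule DERIV_chain[OF FF_deriv[OF p(3) assms(2)] kr0_deriv[OF assms]])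
  then show ?thesis
  proof (rule has_field_derivative_transform_within_open[where S = "{alow n l K<..}"])
    show "open {alow n l K<..}" by simp
    show "mu \<in> {alow n l K<..}" using assms by simp
    fix y assume "y \<in> {alow n l K<..}"
    then show "(FF n l K \<circ> kr0 n l K) y = fp0 n l K y" using fp0_eq[OF assms(1-3)] by simp
  qed
qed

lemma deriv_fp0:
  assumes "n \<ge> 2" "l > 0" "K \<in> {-1,0,1}" "mu > alow n l K"
  shows "deriv (fp0 n l K) mu = FFp n l K (kr0 n l K mu) * inverse (hMp n l K (kr0 n l K mu))"
  using fp0_deriv[OF assms] by (rule DERIV_imp_deriv)

definition sc :: "nat \<Rightarrow> real \<Rightarrow> real" where
  "sc n l = l * sqrt ((real n - 1) / (real n + 1))"

lemma sc_pos: "n \<ge> 2 \<Longrightarrow> l > 0 \<Longrightarrow> sc n l > 0"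
  unfolding sc_def by (auto intro!: mult_pos_pos)

lemma sc_sq: "n \<ge> 2 \<Longrightarrow> l > 0 \<Longrightarrow> (sc n l)^2 = l^2 * ((real n - 1)/(real n + 1))"
  unfolding sc_def by (simp add: power_mult_distrib)

lemma FFp_zero_iff:
  assumes "n \<ge> 2" "l > 0" "K \<in> {-1,0,1}" "s > 0"
  shows "FFp n l K s = 0 \<longleftrightarrow> K = 1 \<and> s = sc n l"
proof -
  have n1: "real n + 1 > 0" "real n - 1 > 0" using assms by auto
  consider "K = -1" | "K = 0" | "K = 1" using assms(3) by auto
  then show ?thesis
  proof cases
    case 1
    have "(1 - real n)/s^2 < 0" using n1 assms by (simp add: divide_neg_pos)
    moreover have "(real n + 1)/l^2 > 0" using n1 assms by simp
    ultimately have "FFp n l K s > 0" unfolding FFp_def using 1 by simp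
    then show ?thesis using 1 by auto
  next
    case 2
    have "FFp n l K s > 0" unfolding FFp_def using 2 n1 assms by simp
    then show ?thesis using 2 by auto
  next
    case 3
    have "FFp n l K s = 0 \<longleftrightarrow> s^2 = (sc n l)^2"
      unfolding FFp_def sc_sq[OF assms(1,2)] using 3 n1 assms by (auto simp: field_simps)
    also have "\<dots> \<longleftrightarrow> s = sc n l" using assms sc_pos[OF assms(1,2)]
      by (simp add: power2_eq_iff_nonneg)
    finally show ?thesis using 3 by simp
  qed
qed

lemma hM_sc: "n \<ge> 2 \<Longrightarrow> l > 0 \<Longrightarrow> hM n l 1 (sc n l) = mu_crit n l"
proof -
  assume a: "n \<ge> 2" "l > 0"
  have n1: "real n + 1 > 0" "real n - 1 > 0" using a by auto
  have e: "(sc n l)^2 / l^2 + 1 = 2 * real n / (real n + 1)"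
    using sc_sq[OF a] a n1 by (simp add: field_simps)
  have m: "mu_crit n l = real n/(real n+1) * (sc n l)^(n-1)" unfolding mu_crit_def sc_def by simp
  have "hM n l 1 (sc n l) = (sc n l)^(n-1) * ((sc n l)^2/l^2 + 1)/2" unfolding hM_def by simp
  also have "\<dots> = mu_crit n l" unfolding m e using n1 by (simp add: field_simps)
  finally show ?thesis .
qed

lemma part23:
  assumes "n \<ge> 2" "l > 0" "K \<in> {-1,0,1}" "mu > alow n l K"
  shows "(deriv (fp0 n l K) mu = 0 \<longleftrightarrow> K = 1 \<and> mu = mu_crit n l)"
    "(K = 1 \<longrightarrow> (mu = mu_crit n l \<longleftrightarrow> kr0 n l K mu = l * sqrt ((real n - 1) / (real n + 1))))"
proof -
  note p = kr0_props[OF assms]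
  have hp: "hMp n l K (kr0 n l K mu) > 0" using hMp_pos[OF assms(1-3) p(1)] .
  have A: "deriv (fp0 n l K) mu = 0 \<longleftrightarrow> K = 1 \<and> kr0 n l K mu = sc n l"
    using deriv_fp0[OF assms] hp FFp_zero_iff[OF assms(1-3) p(3)] by simp
  have B: "K = 1 \<Longrightarrow> (mu = mu_crit n l \<longleftrightarrow> kr0 n l K mu = sc n l)"
  proof -
    assume K1: "K = 1"
    have r0: "rstar n l K = 0" using K1 unfolding rstar_def by simp
    show ?thesis
    proof
      assume "mu = mu_crit n l"
      then have "mu = hM n l K (sc n l)" using hM_sc[OF assms(1,2)] K1 by simp
      then show "kr0 n l K mu = sc n l" using kr0_hM[OF assms(1-3)] sc_pos[OF assms(1,2)] r0 by simp
    next
      assume "kr0 n l K mu = sc n l"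
      then show "mu = mu_crit n l" using p(2) hM_sc[OF assms(1,2)] K1 by simp
    qed
  qed
  show "(deriv (fp0 n l K) mu = 0 \<longleftrightarrow> K = 1 \<and> mu = mu_crit n l)" using A B by blast
  show "(K = 1 \<longrightarrow> (mu = mu_crit n l \<longleftrightarrow> kr0 n l K mu = l * sqrt ((real n - 1) / (real n + 1))))"
    using B unfolding sc_def by blast
qed



lemma dk_expr:
  assumes "r > 0"
  shows "dk n l m r = 2 * (r^(n+1)/l^2 + (real n - 1) * m) / r^n"
  using assms unfolding dk_def by (simp add: field_simps)

lemma dk_pos_slice:
  assumes "r > 0" "r^(n+1)/l^2 + (real n - 1) * m > 0"
  shows "dk n l m r > 0"
  using assms by (simp add: dk_expr)

lemma slice_mono:
  assumes "0 < r1" "r1 \<le> r2" "r1^(n+1)/l^2 + (real n - 1) * m > 0"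
  shows "r2^(n+1)/l^2 + (real n - 1) * m > 0"
proof -
  have "r1^(n+1) \<le> r2^(n+1)" using assms by (intro power_mono) auto
  then have "r1^(n+1)/l^2 \<le> r2^(n+1)/l^2" by (simp add: divide_right_mono)
  then show ?thesis using assms by linarith
qed

lemma slice_at_root:
  assumes "n \<ge> 2" "l > 0" "K \<in> {-1,0,1}" "m > alow n l K"
  shows "(kr0 n l K m)^(n+1)/l^2 + (real n - 1) * m > 0"
proof -
  note p = kr0_props[OF assms]
  have "dk n l m (kr0 n l K m) > 0" using fp0_eq[OF assms] by simp
  then show ?thesis using p(3) by (simp add: dk_expr zero_less_divide_iff)
qed

lemma kf_mono_slice:
  assumes "n \<ge> 2" "l > 0" "0 < r1" "r1 < r2" "r1^(n+1)/l^2 + (real n - 1) * m > 0"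
  shows "kf n l K m r1 < kf n l K m r2"
proof (rule DERIV_pos_imp_increasing[OF assms(4)])
  fix x assume x: "r1 \<le> x" "x \<le> r2"
  then have "x > 0" using assms by linarith
  moreover have "x^(n+1)/l^2 + (real n - 1) * m > 0" using slice_mono[OF assms(3) x(1) assms(5)] .
  ultimately show "\<exists>y. (kf n l K m has_real_derivative y) (at x) \<and> 0 < y"
    using kf_deriv[OF assms(1) _ assms(2)] dk_pos_slice by blast
qed

lemma kf_mono_above:
  assumes "n \<ge> 2" "l > 0" "K \<in> {-1,0,1}" "m > alow n l K"
    "kr0 n l K m \<le> r1" "r1 < r2"
  shows "kf n l K m r1 < kf n l K m r2"
proof -
  note p = kr0_props[OF assms(1-4)]
  have "r1 > 0" using p(3) assms by linarith
  moreover have "r1^(n+1)/l^2 + (real n - 1) * m > 0"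
    using slice_mono[OF p(3) assms(5) slice_at_root[OF assms(1-4)]] .
  ultimately show ?thesis using kf_mono_slice[OF assms(1,2) _ assms(6)] by blast
qed

lemma kf_root:
  assumes "n \<ge> 2" "l > 0" "K \<in> {-1,0,1}" "m > alow n l K"
  shows "kf n l K m (kr0 n l K m) = 0"
  using kr0_props[OF assms] kf_zero_iff[of "kr0 n l K m" l n K m] assms by simp

lemma kf_nonneg_above:
  assumes "n \<ge> 2" "l > 0" "K \<in> {-1,0,1}" "m > alow n l K" "kr0 n l K m \<le> r"
  shows "kf n l K m r \<ge> 0"
proof (cases "r = kr0 n l K m")
  case True then show ?thesis using kf_root[OF assms(1-4)] by simp
next
  case False
  then show ?thesis using kf_mono_above[OF assms(1-5), of r] kf_mono_above[OF assms(1-4) order_refl, of r]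
    kf_root[OF assms(1-4)] assms(5) by simp
qed

lemma krho_mono:
  assumes "n \<ge> 2" "l > 0" "K \<in> {-1,0,1}" "m > alow n l K"
    "kr0 n l K m \<le> r1" "r1 < r2"
  shows "krho n l K m r1 < krho n l K m r2"
proof -
  have "kf n l K m r1 < kf n l K m r2" using kf_mono_above[OF assms] .
  moreover have "kf n l K m r1 \<ge> 0" using kf_nonneg_above[OF assms(1-5)] .
  ultimately have "sqrt (kf n l K m r1) < sqrt (kf n l K m r2)" by simp
  then show ?thesis unfolding krho_def using fp0_eq(3)[OF assms(1-4)] by (simp add: divide_strict_right_mono)
qed

lemma krho_cont:
  assumes "l > 0" "0 < a" "fp0 n l K m \<noteq> 0"
  shows "continuous_on {a..b} (krho n l K m)"
  unfolding krho_def[abs_def] kf_def using assms by (intro continuous_intros) auto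

lemma krho_root:
  assumes "n \<ge> 2" "l > 0" "K \<in> {-1,0,1}" "m > alow n l K"
  shows "krho n l K m (kr0 n l K m) = 0"
  unfolding krho_def using kf_root[OF assms] by simp

lemma krho_exists:
  assumes "n \<ge> 2" "l > 0" "K \<in> {-1,0,1}" "m > alow n l K" "rho \<ge> 0"
  shows "\<exists>r \<ge> kr0 n l K m. krho n l K m r = rho"
proof -
  define s where "s = kr0 n l K m"
  define c where "c = fp0 n l K m"
  have c0: "c > 0" using fp0_eq(3)[OF assms(1-4)] c_def by simp
  have s0: "s > 0" using kr0_props[OF assms(1-4)] s_def by simp
  define B where "B = max (max 1 s) (l^2 * (rho^2*c^2/4 + 1 + 2*\<bar>m\<bar>))"
  have B1: "B \<ge> 1" and Bs: "B \<ge> s" and Bl: "B \<ge> l^2 * (rho^2*c^2/4 + 1 + 2*\<bar>m\<bar>)"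
    unfolding B_def by auto
  have "B^2 \<ge> B" using B1 by (simp add: power2_eq_square)
  then have b2: "B^2 / l^2 \<ge> rho^2*c^2/4 + 1 + 2*\<bar>m\<bar>" using Bl assms(2) by (simp add: field_simps)
  have "B^(n-1) \<ge> 1" using B1 by simp
  then have "\<bar>2*m / B^(n-1)\<bar> \<le> 2*\<bar>m\<bar>"
    by (simp add: abs_mult divide_le_eq_1 field_simps mult_le_cancel_left1 order_trans[OF _ mult_right_mono[of 1]])
  then have t: "2*m / B^(n-1) \<le> 2*\<bar>m\<bar>" using abs_ge_self[of "2*m/B^(n-1)"] by linarith
  have "real_of_int K \<ge> -1" using assms(3) by auto
  then have kB: "kf n l K m B \<ge> rho^2*c^2/4" unfolding kf_def using b2 t by linarith
  have "sqrt (kf n l K m B) \<ge> sqrt ((rho * c / 2)^2)" using kB by (simp add: power_mult_distrib power_divide)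
  then have "sqrt (kf n l K m B) \<ge> rho * c / 2" using assms(5) c0 by simp
  then have hB: "krho n l K m B \<ge> rho" unfolding krho_def c_def[symmetric] using c0 by (simp add: field_simps)
  have cont: "continuous_on {s..B} (krho n l K m)" by (rule krho_cont) (use assms(2) s0 c0 c_def in auto)
  have hs: "krho n l K m s \<le> rho" using krho_root[OF assms(1-4)] s_def assms(5) by simp
  obtain r where "s \<le> r" "r \<le> B" "krho n l K m r = rho"
    using IVT'[of "krho n l K m" s rho B, OF hs hB Bs cont] by blast
  then show ?thesis using s_def by blast
qed

lemma kr_of_rho_props:
  assumes "n \<ge> 2" "l > 0" "K \<in> {-1,0,1}" "m > alow n l K" "rho \<ge> 0"
  shows "kr_of_rho n l K m rho \<ge> kr0 n l K m" "krho n l K m (kr_of_rho n l K m rho) = rho"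
proof -
  have ex: "\<exists>!r. r \<ge> kr0 n l K m \<and> krho n l K m r = rho"
  proof (rule ex_ex1I)
    show "\<exists>r. r \<ge> kr0 n l K m \<and> krho n l K m r = rho" using krho_exists[OF assms] by blast
  next
    fix x y assume x: "x \<ge> kr0 n l K m \<and> krho n l K m x = rho" and y: "y \<ge> kr0 n l K m \<and> krho n l K m y = rho"
    show "x = y"
    proof (rule ccontr)
      assume "x \<noteq> y"
      then consider "x < y" | "y < x" by linarith
      then show False using krho_mono[OF assms(1-4)] x y by (cases) fastforce+
    qed
  qed
  from theI'[OF ex] show "kr_of_rho n l K m rho \<ge> kr0 n l K m" "krho n l K m (kr_of_rho n l K m rho) = rho"
    unfolding kr_of_rho_def by auto
qed

lemma kr_of_rho_krho:
  assumes "n \<ge> 2" "l > 0" "K \<in> {-1,0,1}" "m > alow n l K" "kr0 n l K m \<le> r"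
  shows "kr_of_rho n l K m (krho n l K m r) = r"
proof -
  have k0: "krho n l K m r \<ge> 0" unfolding krho_def using fp0_eq(3)[OF assms(1-4)] kf_nonneg_above[OF assms]
    by (auto intro!: divide_nonneg_pos)
  note q = kr_of_rho_props[OF assms(1-4) k0]
  show ?thesis
  proof (rule ccontr)
    assume ne: "kr_of_rho n l K m (krho n l K m r) \<noteq> r"
    then consider "kr_of_rho n l K m (krho n l K m r) < r" | "r < kr_of_rho n l K m (krho n l K m r)" by linarith
    then show False using krho_mono[OF assms(1-4)] q assms(5) by (cases) fastforce+
  qed
qed

lemma kf_at_R:
  assumes "n \<ge> 2" "l > 0" "K \<in> {-1,0,1}" "m > alow n l K" "rho \<ge> 0"
  shows "kf n l K m (kr_of_rho n l K m rho) = rho^2 * (fp0 n l K m)^2 / 4"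
proof -
  note q = kr_of_rho_props[OF assms]
  have c0: "fp0 n l K m > 0" using fp0_eq(3)[OF assms(1-4)] by simp
  have k0: "kf n l K m (kr_of_rho n l K m rho) \<ge> 0" using kf_nonneg_above[OF assms(1-4) q(1)] .
  have e: "sqrt (kf n l K m (kr_of_rho n l K m rho)) = rho * fp0 n l K m / 2"
    using q(2) c0 unfolding krho_def by (simp add: field_simps)
  have "kf n l K m (kr_of_rho n l K m rho) = (sqrt (kf n l K m (kr_of_rho n l K m rho)))^2" using k0 by simp
  then have "kf n l K m (kr_of_rho n l K m rho) = (rho * fp0 n l K m / 2)^2" unfolding e .
  then show ?thesis by (simp add: power_mult_distrib power_divide)
qed



lemma fp0_has_deriv:
  assumes "n \<ge> 2" "l > 0" "K \<in> {-1,0,1}" "mu > alow n l K"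
  shows "(fp0 n l K has_real_derivative deriv (fp0 n l K) mu) (at mu)"
  using fp0_deriv[OF assms] DERIV_imp_deriv by metis

lemma fp0_cont:
  assumes "n \<ge> 2" "l > 0" "K \<in> {-1,0,1}"
  shows "continuous_on {alow n l K<..} (fp0 n l K)"
  by (rule continuous_at_imp_continuous_on) (use fp0_deriv[OF assms] DERIV_isCont in auto)

lemma R_deriv:
  assumes "n \<ge> 2" "l > 0" "K \<in> {-1,0,1}" "mu > alow n l K" "rho > 0"
  defines "R \<equiv> kr_of_rho n l K mu rho" and "c \<equiv> fp0 n l K mu" and "c' \<equiv> deriv (fp0 n l K) mu"
  shows "((\<lambda>m. kr_of_rho n l K m rho) has_real_derivative
      (2/R^(n-1) + rho^2*c*c'/2) / dk n l mu R) (at mu)"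
proof -
  obtain k where n: "n = Suc (Suc k)" using n_Suc2 assms by blast
  define Psi where "Psi = (\<lambda>x::real\<times>real. (fst x, kf n l K (fst x) (snd x) - rho^2 * (fp0 n l K (fst x))^2/4))"
  define P where "P = (\<lambda>m y r. r > 0 \<and> r^(n+1)/l^2 + (real n - 1)*m > 0 \<and> kf n l K m r - rho^2*(fp0 n l K m)^2/4 = y)"
  define g where "g = (\<lambda>y::real\<times>real. (fst y, THE r. P (fst y) (snd y) r))"
  define S where "S = {x::real\<times>real. alow n l K < fst x} \<inter> {x. 0 < snd x} \<inter> {x. 0 < (snd x)^(n+1)/l^2 + (real n - 1)*fst x}"
  define a where "a = -2/R^(n-1) - rho^2*c*c'/2"
  define b where "b = dk n l mu R"
  define Psi' where "Psi' = (\<lambda>h::real\<times>real. (fst h, a * fst h + b * snd h))"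
  define g' where "g' = (\<lambda>y::real\<times>real. (fst y, (snd y - a * fst y)/b))"
  have uniq: "r1 = r2" if "P m y r1" "P m y r2" for m y r1 r2
  proof (rule ccontr)
    assume "r1 \<noteq> r2"
    then consider "r1 < r2" | "r2 < r1" by linarith
    then show False
    proof cases
      case 1 then show ?thesis using kf_mono_slice[OF assms(1,2), of r1 r2 m K] that unfolding P_def by auto
    next
      case 2 then show ?thesis using kf_mono_slice[OF assms(1,2), of r2 r1 m K] that unfolding P_def by auto
    qed
  qed
  have theP: "(THE r. P m y r) = r" if "P m y r" for m y r
    using that uniq by blast
  have openS: "open S" unfolding S_def
    using assms(2) by (intro open_Int open_Collect_less continuous_intros) auto
  note q = kr_of_rho_props[OF assms(1-4) less_imp_le[OF assms(5)]]
  note p = kr0_props[OF assms(1-4)]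
  have R0: "R > 0" using q(1) p(3) R_def by linarith
  have Rslice: "R^(n+1)/l^2 + (real n - 1)*mu > 0"
    using slice_mono[OF p(3) q(1) slice_at_root[OF assms(1-4)]] R_def by simp
  have x0S: "(mu, R) \<in> S" unfolding S_def using assms(4) R0 Rslice by simp
  have contf: "continuous_on S Psi"
  proof -
    have "continuous_on S (\<lambda>x. fp0 n l K (fst x))"
      by (rule continuous_on_compose2[OF fp0_cont[OF assms(1-3)] continuous_on_fst[OF continuous_on_id]])
         (auto simp: S_def)
    then show ?thesis unfolding Psi_def kf_def using assms(2)
      by (intro continuous_intros) (auto simp: S_def)
  qed
  have gf: "g (Psi x) = x" if "x \<in> S" for x
  proof -
    have "P (fst x) (snd (Psi x)) (snd x)" using that unfolding P_def Psi_def S_def by auto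
    then have "(THE r. P (fst x) (snd (Psi x)) r) = snd x" by (rule theP)
    then show ?thesis unfolding g_def by (simp add: Psi_def prod_eq_iff)
  qed
  have d_fp: "((\<lambda>x. fp0 n l K (fst x)) has_derivative (\<lambda>h. c' * fst h)) (at (mu, R))"
  proof -
    have "(fp0 n l K has_derivative (\<lambda>h. c' * h)) (at (fst (mu, R)))"
      using fp0_has_deriv[OF assms(1-4)] unfolding has_field_derivative_def c'_def by simp
    from has_derivative_compose[OF has_derivative_fst[OF has_derivative_ident] this]
    show ?thesis by simp
  qed
  have d_sq: "((\<lambda>x. rho^2 * (fp0 n l K (fst x))^2/4) has_derivative (\<lambda>h. rho^2*c*c'/2 * fst h)) (at (mu, R))"
    apply (rule has_derivative_eq_rhs)
     apply (rule derivative_eq_intros d_fp refl | simp)+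
    apply (simp add: fun_eq_iff c_def field_simps)
    done
  have d_kf: "((\<lambda>x. kf n l K (fst x) (snd x)) has_derivative (\<lambda>h. (-2/R^(n-1)) * fst h + b * snd h)) (at (mu, R))"
    unfolding kf_def b_def dk_def n
    apply (insert assms(2) R0, rule has_derivative_eq_rhs)
     apply (rule derivative_eq_intros refl | simp)+
    using R0 apply (simp add: fun_eq_iff field_simps power2_eq_square)
    done
  have derf: "(Psi has_derivative Psi') (at (mu, R))"
    unfolding Psi_def Psi'_def
    apply (rule has_derivative_eq_rhs)
     apply (rule has_derivative_Pair has_derivative_fst has_derivative_ident has_derivative_diff d_kf d_sq)+
    apply (simp add: fun_eq_iff a_def field_simps)
    done
  have b0: "b > 0" unfolding b_def using dk_pos_slice[OF R0 Rslice] .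
  have id: "Psi' \<circ> g' = id" unfolding Psi'_def g'_def using b0 by (auto simp: fun_eq_iff)
  have dg: "(g has_derivative g') (at (Psi (mu, R)))"
    by (rule has_derivative_inverse_strong[OF openS x0S contf gf derf id])
  have Psi0: "Psi (mu, R) = (mu, 0)"
    unfolding Psi_def using kf_at_R[OF assms(1-4) less_imp_le[OF assms(5)]] R_def c_def by simp
  have "((\<lambda>m. (m, 0::real)) has_derivative (\<lambda>h. (h, 0))) (at mu)"
    by (auto intro!: derivative_eq_intros)
  from has_derivative_compose[OF this dg[unfolded Psi0]]
  have "((\<lambda>m. g (m, 0)) has_derivative (\<lambda>h. g' (h, 0))) (at mu)" .
  from has_derivative_snd[OF this]
  have "((\<lambda>m. snd (g (m, 0))) has_derivative (\<lambda>h. snd (g' (h, 0)))) (at mu)" .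
  moreover have "(\<lambda>h. snd (g' (h, 0))) = (*) (-a/b)"
    unfolding g'_def by (simp add: fun_eq_iff field_simps)
  ultimately have "((\<lambda>m. snd (g (m, 0))) has_real_derivative (-a/b)) (at mu)"
    unfolding has_field_derivative_def by simp
  moreover have "-a/b = (2/R^(n-1) + rho^2*c*c'/2) / dk n l mu R"
    unfolding a_def b_def by (simp add: minus_divide_left[symmetric])
  ultimately have "((\<lambda>m. snd (g (m, 0))) has_real_derivative ((2/R^(n-1) + rho^2*c*c'/2) / dk n l mu R)) (at mu)"
    by simp
  then show ?thesis
  proof (rule has_field_derivative_transform_within_open[where S = "{alow n l K<..}"])
    show "open {alow n l K<..}" by simp
    show "mu \<in> {alow n l K<..}" using assms by simp
    fix m assume m: "m \<in> {alow n l K<..}"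
    then have m': "m > alow n l K" by simp
    note q' = kr_of_rho_props[OF assms(1-3) m' less_imp_le[OF assms(5)]]
    note p' = kr0_props[OF assms(1-3) m']
    have "P m 0 (kr_of_rho n l K m rho)"
      unfolding P_def using q'(1) p'(3) slice_mono[OF p'(3) q'(1) slice_at_root[OF assms(1-3) m']]
        kf_at_R[OF assms(1-3) m' less_imp_le[OF assms(5)]] by simp
    then show "snd (g (m, 0)) = kr_of_rho n l K m rho" unfolding g_def by (simp add: theP)
  qed
qed



definition Rp :: "nat \<Rightarrow> real \<Rightarrow> int \<Rightarrow> real \<Rightarrow> real \<Rightarrow> real" where
  "Rp n l K mu rho = (let R = kr_of_rho n l K mu rho; c = fp0 n l K mu; c' = deriv (fp0 n l K) mu in
     (2/R^(n-1) + rho^2*c*c'/2) / dk n l mu R)"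

definition DDp :: "nat \<Rightarrow> real \<Rightarrow> int \<Rightarrow> real \<Rightarrow> real \<Rightarrow> real" where
  "DDp n l K mu rho = (let R = kr_of_rho n l K mu rho; P = Rp n l K mu rho in
     2*P/l^2 + 2*(real n - 1)/R^n - 2*real n*(real n - 1)*mu*P/R^(n+1))"

lemma gB_deriv:
  assumes "n \<ge> 2" "l > 0" "K \<in> {-1,0,1}" "mu > alow n l K" "rho > 0"
  shows "((\<lambda>m. gB n l K m rho) has_real_derivative
     2 * kr_of_rho n l K mu rho * Rp n l K mu rho) (at mu)"
  unfolding gB_def
  apply (rule DERIV_cong)
   apply (rule derivative_eq_intros R_deriv[OF assms] refl | simp)+
  apply (simp add: Rp_def Let_def)
  done

lemma deriv_kf_eq:
  assumes "n \<ge> 2" "l > 0" "r > 0"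
  shows "deriv (kf n l K m) r = dk n l m r"
  using kf_deriv[OF assms(1,3,2)] by (rule DERIV_imp_deriv)

lemma R_pos:
  assumes "n \<ge> 2" "l > 0" "K \<in> {-1,0,1}" "m > alow n l K" "rho \<ge> 0"
  shows "kr_of_rho n l K m rho > 0"
  using kr_of_rho_props(1)[OF assms] kr0_props(3)[OF assms(1-4)] by linarith

lemma D_pos:
  assumes "n \<ge> 2" "l > 0" "K \<in> {-1,0,1}" "m > alow n l K" "rho \<ge> 0"
  shows "dk n l m (kr_of_rho n l K m rho) > 0"
proof -
  note q = kr_of_rho_props[OF assms]
  note p = kr0_props[OF assms(1-4)]
  show ?thesis using dk_pos_slice[OF R_pos[OF assms] slice_mono[OF p(3) q(1) slice_at_root[OF assms(1-4)]]] .
qed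

lemma dkR_deriv:
  assumes "n \<ge> 2" "l > 0" "K \<in> {-1,0,1}" "mu > alow n l K" "rho > 0"
  shows "((\<lambda>m. dk n l m (kr_of_rho n l K m rho)) has_real_derivative DDp n l K mu rho) (at mu)"
proof -
  obtain k where n: "n = Suc (Suc k)" using n_Suc2 assms by blast
  have R0: "kr_of_rho n l K mu rho > 0" using R_pos[OF assms(1-4)] assms(5) by simp
  have R_d: "((\<lambda>m. kr_of_rho n l K m rho) has_real_derivative Rp n l K mu rho) (at mu)"
    using R_deriv[OF assms] unfolding Rp_def Let_def .
  show ?thesis
    unfolding dk_def
    apply (insert R0 assms(2), rule DERIV_cong)
     apply (rule derivative_eq_intros R_d refl | simp)+
    unfolding DDp_def Let_def n
    apply (simp add: field_simps power2_eq_square eval_nat_numeral)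
    done
qed

lemma gA_deriv:
  assumes "n \<ge> 2" "l > 0" "K \<in> {-1,0,1}" "mu > alow n l K" "rho > 0"
  defines "c \<equiv> fp0 n l K mu" and "c' \<equiv> deriv (fp0 n l K) mu"
    and "D \<equiv> dk n l mu (kr_of_rho n l K mu rho)"
  shows "((\<lambda>m. gA n l K m rho) has_real_derivative
     2*c*c'/D^2 - 2*c^2*DDp n l K mu rho/D^3) (at mu)"
proof -
  have D0: "D > 0" using D_pos[OF assms(1-4)] assms(5) D_def by simp
  define E where "E = (\<lambda>m. dk n l m (kr_of_rho n l K m rho))"
  have E_d: "(E has_real_derivative DDp n l K mu rho) (at mu)" unfolding E_def by (rule dkR_deriv[OF assms(1-5)])
  have ED: "E mu = D" unfolding E_def D_def ..
  have "((\<lambda>m. (fp0 n l K m)^2 / (E m)^2) has_real_derivative 2*c*c'/D^2 - 2*c^2*DDp n l K mu rho/D^3) (at mu)"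
    apply (insert D0, rule DERIV_cong)
     apply (rule derivative_eq_intros E_d fp0_has_deriv[OF assms(1-4)] refl | simp add: ED)+
    unfolding c_def[symmetric] c'_def[symmetric]
    apply (simp add: field_simps power2_eq_square eval_nat_numeral)
    done
  then show ?thesis
  proof (rule has_field_derivative_transform_within_open[where S = "{alow n l K<..}"])
    show "open {alow n l K<..}" by simp
    show "mu \<in> {alow n l K<..}" using assms by simp
    fix m assume m: "m \<in> {alow n l K<..}"
    then have m': "m > alow n l K" by simp
    show "(fp0 n l K m)^2 / (E m)^2 = gA n l K m rho"
      unfolding gA_def E_def using deriv_kf_eq[OF assms(1,2) R_pos[OF assms(1-3) m' less_imp_le[OF assms(5)]]]
      by simp
  qed
qed



lemma integrand_eq:
  assumes "n \<ge> 2" "l > 0" "K \<in> {-1,0,1}" "mu > alow n l K" "rho > 0"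
  defines "R \<equiv> kr_of_rho n l K mu rho" and "c \<equiv> fp0 n l K mu" and "c' \<equiv> deriv (fp0 n l K) mu"
    and "D \<equiv> dk n l mu (kr_of_rho n l K mu rho)"
  shows "var_norm_sq n l K mu rho * vol_density n l K mu rho =
    ((2*c'/c - 2*DDp n l K mu rho/D)^2 + real n * (2*Rp n l K mu rho/R)^2) * (rho * (c/D) * R^n)"
proof -
  have D0: "D > 0" using D_pos[OF assms(1-4)] assms(5) D_def by simp
  have R0: "R > 0" using R_pos[OF assms(1-4)] assms(5) R_def by simp
  have c0: "c > 0" using fp0_eq(3)[OF assms(1-4)] c_def by simp
  have gA: "gA n l K mu rho = c^2/D^2"
    unfolding gA_def c_def D_def using deriv_kf_eq[OF assms(1,2) R_pos[OF assms(1-4) less_imp_le[OF assms(5)]]] by simp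
  have gB: "gB n l K mu rho = R^2" unfolding gB_def R_def ..
  have dA: "deriv (\<lambda>m. gA n l K m rho) mu = 2*c*c'/D^2 - 2*c^2*DDp n l K mu rho/D^3"
    using gA_deriv[OF assms(1-5)] unfolding c_def c'_def D_def by (rule DERIV_imp_deriv)
  have dB: "deriv (\<lambda>m. gB n l K m rho) mu = 2 * R * Rp n l K mu rho"
    using gB_deriv[OF assms(1-5)] unfolding R_def by (rule DERIV_imp_deriv)
  have v1: "deriv (\<lambda>m. gA n l K m rho) mu / gA n l K mu rho = 2*c'/c - 2*DDp n l K mu rho/D"
    unfolding dA gA using D0 c0 by (simp add: field_simps power2_eq_square eval_nat_numeral)
  have v2: "deriv (\<lambda>m. gB n l K m rho) mu / gB n l K mu rho = 2*Rp n l K mu rho/R"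
    unfolding dB gB using R0 by (simp add: field_simps power2_eq_square)
  have vol: "vol_density n l K mu rho = rho * (c/D) * R^n"
    unfolding vol_density_def gA R_def[symmetric] using D0 c0 by (simp add: real_sqrt_divide)
  show ?thesis unfolding var_norm_sq_def v1 v2 vol ..
qed

lemma integrand_nonneg:
  assumes "rho \<ge> 0" "kr_of_rho n l K mu rho \<ge> 0"
  shows "var_norm_sq n l K mu rho * vol_density n l K mu rho \<ge> 0"
proof -
  have "var_norm_sq n l K mu rho \<ge> 0" unfolding var_norm_sq_def by simp
  moreover have "gA n l K mu rho \<ge> 0" unfolding gA_def by simp
  then have "vol_density n l K mu rho \<ge> 0" unfolding vol_density_def using assms by simp
  ultimately show ?thesis by simp
qed

lemma R_cont:
  assumes "n \<ge> 2" "l > 0" "K \<in> {-1,0,1}" "mu > alow n l K" "rho > 0"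
  shows "isCont (kr_of_rho n l K mu) rho"
proof -
  define s where "s = kr0 n l K mu"
  define x where "x = kr_of_rho n l K mu rho"
  note q = kr_of_rho_props[OF assms(1-4) less_imp_le[OF assms(5)]]
  have s0: "s > 0" using kr0_props(3)[OF assms(1-4)] s_def by simp
  have xs: "x > s"
  proof -
    have "x \<ge> s" using q(1) x_def s_def by simp
    moreover have "x \<noteq> s" using q(2) krho_root[OF assms(1-4)] assms(5) x_def s_def by auto
    ultimately show ?thesis by simp
  qed
  define d where "d = (x - s)/2"
  have d0: "d > 0" using xs d_def by simp
  have c0: "fp0 n l K mu \<noteq> 0" using fp0_eq(3)[OF assms(1-4)] by simp
  have "isCont (kr_of_rho n l K mu) (krho n l K mu x)"
  proof (rule isCont_inverse_function[where f = "krho n l K mu" and g = "kr_of_rho n l K mu" and x = x, OF d0])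
    fix z assume "\<bar>z - x\<bar> \<le> d"
    then have "z \<ge> x - d" by (simp add: abs_le_iff)
    moreover have "x - d > s" unfolding d_def using xs by (simp add: field_simps)
    ultimately have z: "z > s" by linarith
    show "kr_of_rho n l K mu (krho n l K mu z) = z"
      using kr_of_rho_krho[OF assms(1-4)] z s_def by simp
  next
    fix z assume "\<bar>z - x\<bar> \<le> d"
    then have "z \<ge> x - d" by (simp add: abs_le_iff)
    moreover have "x - d > s" unfolding d_def using xs by (simp add: field_simps)
    ultimately have z: "z > 0" using s0 by linarith
    show "isCont (krho n l K mu) z"
      unfolding krho_def[abs_def] kf_def using z c0 assms(2) by (intro continuous_intros) auto
  qed
  then show ?thesis using q(2) x_def by simp
qed



lemma open_leb: "({0<..} :: real set) \<in> sets lebesgue"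
  by simp

lemma not_integrable_of_lower:
  fixes F :: "real \<Rightarrow> real"
  assumes nn: "\<And>x. x > 0 \<Longrightarrow> F x \<ge> 0" and e: "e > 0" and r1: "r1 > 0"
    and low: "\<And>x. x \<ge> r1 \<Longrightarrow> F x \<ge> e"
  shows "\<not> F integrable_on {0<..}"
proof
  assume int: "F integrable_on {0<..}"
  define I where "I = integral {0<..} F"
  define T where "T = (\<bar>I\<bar> + 1) / e"
  have T0: "T > 0" unfolding T_def using e by simp
  have sub: "{r1..r1+T} \<subseteq> {0<..}" using r1 T0 by auto
  have int2: "F integrable_on {r1..r1+T}" by (rule integrable_on_subinterval[OF int sub])
  have "integral {r1..r1+T} (\<lambda>x. e) \<le> integral {r1..r1+T} F"
    by (rule integral_le) (use int2 low in auto)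
  moreover have "integral {r1..r1+T} (\<lambda>x. e) = T * e" using T0 by simp
  moreover have "integral {r1..r1+T} F \<le> I"
    unfolding I_def by (rule integral_subset_le[OF sub int2 int]) (use nn in auto)
  ultimately have "T * e \<le> I" using T0 by simp
  moreover have "T * e = \<bar>I\<bar> + 1" unfolding T_def using e by simp
  ultimately show False by simp
qed

lemma lin1: "(A::real) - B \<le> X \<Longrightarrow> B \<le> Y \<Longrightarrow> Z = 2*Y \<Longrightarrow> Z \<le> A \<Longrightarrow> Y \<le> X" by linarith

lemma absaux: "(D::real) > 0 \<Longrightarrow> R > 0 \<Longrightarrow> \<bar>2*(X/D)/R\<bar> = 2*(\<bar>X\<bar>/D)/R"
  by (simp add: abs_mult abs_divide)

lemma lower_alg:
  fixes R D c c' mu l rho kfR :: real and n :: nat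
  assumes R1: "R \<ge> 1" and l: "l > 0" and c: "c > 0" and c': "c' \<noteq> 0" and rho: "rho \<ge> 1" and n: "n \<ge> 2"
    and hkf: "kfR \<ge> R^2/(2*l^2)" and kfe: "kfR = rho^2*c^2/4"
    and h2: "2/R^(n-1) \<le> \<bar>c'\<bar>*R^2/(2*l^2*c)"
    and D0: "0 < D" and hD: "D \<le> 3*R/l^2"
  shows "real n * (2*((2/R^(n-1) + rho^2*c*c'/2)/D)/R)^2 * (rho*(c/D)*R^n) \<ge> real n * c'^2 * l^2 / (27*c)"
proof -
  have R0: "R > 0" using R1 by simp
  have Rn1: "R^(n-1) > 0" using R0 by simp
  have "rho^2*c = 4*kfR/c" using kfe c by (simp add: field_simps power2_eq_square)
  then have a1: "\<bar>rho^2*c*c'/2\<bar> = 2*kfR*\<bar>c'\<bar>/c" using c hkf l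
    by (simp add: abs_mult abs_divide field_simps)
  have "2*kfR*\<bar>c'\<bar>/c \<ge> 2*(R^2/(2*l^2))*\<bar>c'\<bar>/c"
    using hkf c c' by (intro divide_right_mono mult_right_mono) auto
  then have a2: "\<bar>rho^2*c*c'/2\<bar> \<ge> \<bar>c'\<bar>*R^2/(l^2*c)" using a1 by (simp add: field_simps)
  have "2/R^(n-1) \<ge> 0" using Rn1 by simp
  have a3: "\<bar>2/R^(n-1) + rho^2*c*c'/2\<bar> \<ge> \<bar>c'\<bar>*R^2/(2*l^2*c)"
  proof -
    have "\<bar>2/R^(n-1) + rho^2*c*c'/2\<bar> \<ge> \<bar>rho^2*c*c'/2\<bar> - \<bar>2/R^(n-1)\<bar>" by linarith
    moreover have "\<bar>2/R^(n-1)\<bar> = 2/R^(n-1)" using Rn1 by simp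
    moreover have "\<bar>c'\<bar>*R^2/(l^2*c) = 2 * (\<bar>c'\<bar>*R^2/(2*l^2*c))" using l c by (simp add: field_simps)
    ultimately show ?thesis using lin1[OF _ h2 _ a2] by simp
  qed
  have pos1: "\<bar>c'\<bar>*R^2/(2*l^2*c) \<ge> 0" using c l by simp
  have a4: "\<bar>2/R^(n-1) + rho^2*c*c'/2\<bar> / D \<ge> (\<bar>c'\<bar>*R^2/(2*l^2*c)) / (3*R/l^2)"
    by (rule frac_le[OF _ a3 D0 hD]) simp
  have e4: "(\<bar>c'\<bar>*R^2/(2*l^2*c)) / (3*R/l^2) = \<bar>c'\<bar>*R/(6*c)" using R0 l c by (simp add: field_simps power2_eq_square)
  have a5: "\<bar>2*((2/R^(n-1) + rho^2*c*c'/2)/D)/R\<bar> \<ge> \<bar>c'\<bar>/(3*c)"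
  proof -
    have "\<bar>2*((2/R^(n-1) + rho^2*c*c'/2)/D)/R\<bar> = 2 * (\<bar>2/R^(n-1) + rho^2*c*c'/2\<bar> / D) / R"
      using D0 R0 by (rule absaux)
    also have "\<dots> \<ge> 2 * (\<bar>c'\<bar>*R/(6*c)) / R"
      using a4 e4 R0 by (intro divide_right_mono mult_left_mono) auto
    also have "2 * (\<bar>c'\<bar>*R/(6*c)) / R = \<bar>c'\<bar>/(3*c)" using R0 c by (simp add: field_simps)
    finally show ?thesis .
  qed
  have a6: "(2*((2/R^(n-1) + rho^2*c*c'/2)/D)/R)^2 \<ge> (\<bar>c'\<bar>/(3*c))^2"
  proof -
    have "(\<bar>c'\<bar>/(3*c))^2 \<le> (\<bar>2*((2/R^(n-1) + rho^2*c*c'/2)/D)/R\<bar>)^2"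
      using a5 c by (intro power_mono) auto
    then show ?thesis by (simp only: power2_abs)
  qed
  have Rn: "R^n \<ge> R"
  proof -
    have "R^1 \<le> R^n" using R1 n by (intro power_increasing) auto
    then show ?thesis by simp
  qed
  have a7: "rho*(c/D)*R^n \<ge> c*l^2/3"
  proof -
    have "c/D \<ge> c/(3*R/l^2)" using c D0 hD R0 l by (intro divide_left_mono) auto
    moreover have "rho*R^n \<ge> 1 * R" using rho Rn R0 by (intro mult_mono) auto
    ultimately have "(c/D) * (rho*R^n) \<ge> c/(3*R/l^2) * R"
      using c R0 l D0 by (intro mult_mono) auto
    also have "c/(3*R/l^2) * R = c*l^2/3" using R0 l by (simp add: field_simps)
    finally show ?thesis by (simp add: mult_ac)
  qed
  have "real n * (2*((2/R^(n-1) + rho^2*c*c'/2)/D)/R)^2 * (rho*(c/D)*R^n)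
      \<ge> real n * (\<bar>c'\<bar>/(3*c))^2 * (c*l^2/3)"
    using a6 a7 c l by (intro mult_mono mult_left_mono) auto
  also have "real n * (\<bar>c'\<bar>/(3*c))^2 * (c*l^2/3) = real n * c'^2 * l^2 / (27*c)"
    using c by (simp add: field_simps power2_eq_square)
  finally show ?thesis .
qed



lemma div_pow_le:
  fixes R x :: real
  assumes "R \<ge> 1" "x \<ge> 0"
  shows "x / R^k \<le> x"
proof -
  have "R^k \<ge> 1" using assms by simp
  then show ?thesis using assms by (simp add: divide_le_eq mult_le_cancel_left1 order_trans[OF _ mult_right_mono[of 1]] field_simps)
qed

lemma sum_mult_ge: "(A::real) \<ge> 0 \<Longrightarrow> V \<ge> 0 \<Longrightarrow> B * V \<le> (A + B) * V"
  by (simp add: mult_right_mono)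

lemma not_L2:
  assumes "n \<ge> 2" "l > 0" "K \<in> {-1,0,1}" "mu > alow n l K" and c'ne: "deriv (fp0 n l K) mu \<noteq> 0"
  shows "\<not> variation_L2 n l K mu"
proof -
  define c where "c = fp0 n l K mu"
  define c' where "c' = deriv (fp0 n l K) mu"
  define s where "s = kr0 n l K mu"
  have c0: "c > 0" using fp0_eq(3)[OF assms(1-4)] c_def by simp
  have c'0: "c' \<noteq> 0" using c'ne c'_def by simp
  have s0: "s > 0" using kr0_props(3)[OF assms(1-4)] s_def by simp
  define R1 where "R1 = max (max 1 s) (max (2*l^2*(1+2*\<bar>mu\<bar>)) (max (4*l^2*c/\<bar>c'\<bar>) (2*(real n - 1)*\<bar>mu\<bar>*l^2)))"
  have R1: "R1 \<ge> 1" "R1 \<ge> s" "R1 \<ge> 2*l^2*(1+2*\<bar>mu\<bar>)" "R1 \<ge> 4*l^2*c/\<bar>c'\<bar>" "R1 \<ge> 2*(real n - 1)*\<bar>mu\<bar>*l^2"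
    unfolding R1_def by (simp_all only: le_max_iff_disj order_refl simp_thms)
  define r1 where "r1 = max 1 (krho n l K mu R1)"
  have r1: "r1 \<ge> 1" "r1 \<ge> krho n l K mu R1" unfolding r1_def by auto
  have big: "kr_of_rho n l K mu rho \<ge> R1" if "rho \<ge> r1" for rho
  proof (rule ccontr)
    assume "\<not> R1 \<le> kr_of_rho n l K mu rho"
    then have lt: "kr_of_rho n l K mu rho < R1" by simp
    have rho0: "rho \<ge> 0" using that r1 by linarith
    note q = kr_of_rho_props[OF assms(1-4) rho0]
    have "krho n l K mu (kr_of_rho n l K mu rho) < krho n l K mu R1"
      using krho_mono[OF assms(1-4) q(1) lt] .
    then show False using q(2) r1 that by linarith
  qed
  define F where "F = (\<lambda>rho. var_norm_sq n l K mu rho * vol_density n l K mu rho)"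
  define e where "e = real n * c'^2 * l^2 / (27*c)"
  have e0: "e > 0" unfolding e_def using c0 c'0 assms(1,2) by simp
  have nn: "F x \<ge> 0" if "x > 0" for x
    unfolding F_def using integrand_nonneg R_pos[OF assms(1-4)] that by (simp add: less_imp_le)
  have low: "F rho \<ge> e" if rho: "rho \<ge> r1" for rho
  proof -
    have rho0: "rho > 0" using rho r1 by linarith
    define R where "R = kr_of_rho n l K mu rho"
    define D where "D = dk n l mu R"
    have RR1: "R \<ge> R1" using big[OF rho] R_def by simp
    have Rge1: "R \<ge> 1" using RR1 R1 by linarith
    have R0: "R > 0" using Rge1 by simp
    have D0: "D > 0" using D_pos[OF assms(1-4) less_imp_le[OF rho0]] unfolding D_def R_def .
    have kfe: "kf n l K mu R = rho^2*c^2/4" using kf_at_R[OF assms(1-4) less_imp_le[OF rho0]] R_def c_def by simp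
    have "R^2 \<ge> R" using Rge1 by (simp add: power2_eq_square)
    then have "R^2 \<ge> 2*l^2*(1+2*\<bar>mu\<bar>)" using RR1 R1 by linarith
    then have t1: "R^2/(2*l^2) \<ge> 1+2*\<bar>mu\<bar>" using assms(2) by (simp add: field_simps)
    have "2*mu/R^(n-1) \<le> 2*\<bar>mu\<bar>/R^(n-1)" using R0 by (intro divide_right_mono) auto
    also have "\<dots> \<le> 2*\<bar>mu\<bar>" using div_pow_le[OF Rge1, of "2*\<bar>mu\<bar>" "n-1"] by simp
    finally have t2: "2*mu/R^(n-1) \<le> 2*\<bar>mu\<bar>" .
    have "real_of_int K \<ge> -1" using assms(3) by auto
    then have hkf: "kf n l K mu R \<ge> R^2/(2*l^2)" unfolding kf_def using t1 t2 by (simp add: field_simps) 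
    have Rn1: "R^(n-1) \<ge> R"
    proof -
      have "R^1 \<le> R^(n-1)" using Rge1 assms(1) by (intro power_increasing) auto
      then show ?thesis by simp
    qed
    have "R^1 \<le> R^3" using Rge1 by (intro power_increasing) auto
    then have "R^3 \<ge> R" by simp
    then have "R^3 \<ge> 4*l^2*c/\<bar>c'\<bar>" using RR1 R1 by linarith
    then have "\<bar>c'\<bar>*R^3 \<ge> 4*l^2*c" using c'0 by (simp add: field_simps)
    then have "2/R \<le> \<bar>c'\<bar>*R^2/(2*l^2*c)" using R0 c0 assms(2) by (simp add: field_simps power3_eq_cube power2_eq_square)
    moreover have "2/R^(n-1) \<le> 2/R" using Rn1 R0 by (intro divide_left_mono) auto
    ultimately have h2: "2/R^(n-1) \<le> \<bar>c'\<bar>*R^2/(2*l^2*c)" by linarith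
    have n1: "2*(real n - 1) \<ge> 0" using assms(1) by simp
    have "2*(real n - 1)*mu \<le> 2*(real n - 1)*\<bar>mu\<bar>" using n1 by (intro mult_left_mono) auto
    then have "2*(real n - 1)*mu/R^n \<le> 2*(real n - 1)*\<bar>mu\<bar>/R^n" using R0 by (intro divide_right_mono) auto
    also have "\<dots> \<le> 2*(real n - 1)*\<bar>mu\<bar>" using div_pow_le[OF Rge1, of "2*(real n - 1)*\<bar>mu\<bar>" n] n1 by simp
    finally have "2*(real n - 1)*mu/R^n \<le> 2*(real n - 1)*\<bar>mu\<bar>" .
    also have "\<dots> \<le> R/l^2" using RR1 R1 assms(2) by (simp add: field_simps)
    finally have hD: "D \<le> 3*R/l^2" unfolding D_def dk_def by simp
    have rho1: "rho \<ge> 1" using rho r1 by linarith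
    have L: "real n * (2*((2/R^(n-1) + rho^2*c*c'/2)/D)/R)^2 * (rho*(c/D)*R^n) \<ge> e"
      unfolding e_def by (rule lower_alg[OF Rge1 assms(2) c0 c'0 rho1 assms(1) hkf kfe h2 D0 hD])
    have Fe: "F rho = ((2*c'/c - 2*DDp n l K mu rho/D)^2 + real n * (2*Rp n l K mu rho/R)^2) * (rho * (c/D) * R^n)"
      unfolding F_def using integrand_eq[OF assms(1-4) rho0] unfolding R_def D_def c_def c'_def .
    have vol0: "rho * (c/D) * R^n \<ge> 0" using rho0 c0 D0 R0 by simp
    have "F rho \<ge> real n * (2*Rp n l K mu rho/R)^2 * (rho * (c/D) * R^n)"
      unfolding Fe by (rule sum_mult_ge[OF zero_le_power2 vol0])
    moreover have "Rp n l K mu rho = (2/R^(n-1) + rho^2*c*c'/2)/D"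
      unfolding Rp_def Let_def R_def D_def c_def c'_def ..
    ultimately show ?thesis using L by simp
  qed
  have r10: "r1 > 0" using r1 by linarith
  have "\<not> F integrable_on {0<..}" by (rule not_integrable_of_lower[OF nn e0 r10 low])
  then show ?thesis unfolding variation_L2_def F_def .
qed



lemma abs3: "(a::real) \<ge> 0 \<Longrightarrow> b \<ge> 0 \<Longrightarrow> x \<ge> 0 \<Longrightarrow> \<bar>a + b - x\<bar> \<le> a + b + x"
  by linarith

lemma upper_alg:
  fixes R D P Q mu l rho c s :: real and n :: nat
  assumes s0: "s > 0" and Rs: "R \<ge> s" and l: "l > 0" and mu: "mu \<ge> 0" and c: "c > 0" and rho: "rho > 0" and n: "n \<ge> 2"
    and D: "D = 2*R/l^2 + 2*(real n - 1)*mu/R^n"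
    and P: "P = (2/R^(n-1))/D"
    and Q: "Q = 2*P/l^2 + 2*(real n - 1)/R^n - 2*real n*(real n - 1)*mu*P/R^(n+1)"
  shows "((2*Q/D)^2 + real n*(2*P/R)^2) * (rho*(c/D)*R^n)
     \<le> ((2*real n + 2*real n*(real n - 1)*mu*l^2/s^(n+1))^2 + 4*real n) * l^6 * c / 2 * (rho / (R^n * R^3))"
proof -
  define C1 where "C1 = 2*real n + 2*real n*(real n - 1)*mu*l^2/s^(n+1)"
  have R0: "R > 0" using s0 Rs by linarith
  have RN0: "R^n > 0" using R0 by simp
  have n1: "real n - 1 \<ge> 0" using n by simp
  have hD: "D \<ge> 2*R/l^2" unfolding D using n1 mu R0 by simp
  have "2*R/l^2 > 0" using R0 l by simp
  then have D0: "D > 0" using hD by linarith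
  have sn: "Suc (n-1) = n" using n by simp
  have RN: "R^(n-1)*R = R^n" by (metis sn power_Suc2)
  have P0: "P \<ge> 0" unfolding P using D0 R0 by simp
  have hP: "P \<le> l^2/R^n"
  proof -
    have "P = 2/(R^(n-1)*D)" unfolding P by simp
    also have "\<dots> \<le> 2/(R^(n-1)*(2*R/l^2))" using R0 l hD D0 by (intro divide_left_mono mult_left_mono mult_pos_pos) auto
    also have "\<dots> = l^2/R^n" unfolding RN[symmetric] using R0 l by (simp add: field_simps)
    finally show ?thesis .
  qed
  have t1: "2*P/l^2 \<le> 2/R^n" using hP l RN0 by (simp add: field_simps)
  have Rs1: "R^(n+1) \<ge> s^(n+1)" using Rs s0 by (intro power_mono) auto
  have t3: "2*real n*(real n - 1)*mu*P/R^(n+1) \<le> 2*real n*(real n - 1)*mu*(l^2/R^n)/s^(n+1)"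
  proof (rule frac_le)
    show "0 \<le> 2*real n*(real n - 1)*mu*(l^2/R^n)" using n1 mu l RN0 by simp
    show "2*real n*(real n - 1)*mu*P \<le> 2*real n*(real n - 1)*mu*(l^2/R^n)"
      using hP n1 mu by (intro mult_left_mono) auto
    show "0 < s^(n+1)" using s0 by simp
  qed (rule Rs1)
  have t3': "2*real n*(real n - 1)*mu*P/R^(n+1) \<ge> 0" using n1 mu P0 R0 by simp
  have t2: "2*(real n - 1)/R^n \<ge> 0" using n1 RN0 by simp
  have "2*real n*(real n - 1)*mu*(l^2/R^n)/s^(n+1) = (2*real n*(real n - 1)*mu*l^2/s^(n+1))/R^n"
    by (simp add: field_simps)
  have "\<bar>Q\<bar> \<le> 2*P/l^2 + 2*(real n - 1)/R^n + 2*real n*(real n - 1)*mu*P/R^(n+1)"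
    unfolding Q using abs_triangle_ineq4 t3' t2 P0 l by (intro abs3) auto
  also have "\<dots> \<le> 2/R^n + 2*(real n - 1)/R^n + (2*real n*(real n - 1)*mu*l^2/s^(n+1))/R^n"
    using t1 t3 \<open>2*real n*(real n - 1)*mu*(l^2/R^n)/s^(n+1) = _\<close> by linarith
  also have "\<dots> = (2 + 2*(real n - 1) + (2*real n*(real n - 1)*mu*l^2/s^(n+1)))/R^n"
    by (simp only: add_divide_distrib)
  also have "\<dots> = C1/R^n" unfolding C1_def by (simp add: algebra_simps)
  finally have hQ: "\<bar>Q\<bar> \<le> C1/R^n" .
  have C10: "C1 \<ge> 0" unfolding C1_def using n1 mu l s0 by simp
  have hD2: "2*R/l^2 > 0" using R0 l by simp
  have q1: "(2*Q/D)^2 \<le> (2*(C1/R^n)/(2*R/l^2))^2"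
  proof -
    have "\<bar>2*Q/D\<bar> = 2*\<bar>Q\<bar>/D" using D0 by (simp add: abs_mult abs_divide)
    also have "\<dots> \<le> 2*(C1/R^n)/(2*R/l^2)"
      by (rule frac_le) (use C10 RN0 hQ hD2 hD in auto)
    finally have "\<bar>2*Q/D\<bar> \<le> 2*(C1/R^n)/(2*R/l^2)" .
    then have "\<bar>2*Q/D\<bar>^2 \<le> (2*(C1/R^n)/(2*R/l^2))^2" by (intro power_mono) auto
    then show ?thesis by (simp only: power2_abs)
  qed
  have q2: "(2*P/R)^2 \<le> (2*(l^2/R^n)/R)^2"
    using P0 hP R0 by (intro power_mono divide_right_mono mult_left_mono) auto
  have "c/D \<le> c/(2*R/l^2)"
    by (rule divide_left_mono[OF hD]) (use c mult_pos_pos[OF D0 hD2] in auto)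
  then have q3: "rho*(c/D)*R^n \<le> rho*(c/(2*R/l^2))*R^n"
    using rho RN0 by (intro mult_right_mono mult_left_mono) auto
  have "((2*Q/D)^2 + real n*(2*P/R)^2) * (rho*(c/D)*R^n)
      \<le> ((2*(C1/R^n)/(2*R/l^2))^2 + real n*(2*(l^2/R^n)/R)^2) * (rho*(c/(2*R/l^2))*R^n)"
    by (rule mult_mono[OF add_mono[OF q1 mult_left_mono[OF q2]] q3]) (use rho c D0 RN0 in auto)
  also have "\<dots> = (C1^2 + 4*real n) * l^6 * c / 2 * (rho / (R^n * R^3))"
    using R0 RN0 l by (simp add: field_simps power2_eq_square eval_nat_numeral)
  finally show ?thesis unfolding C1_def .
qed

lemma G_int:
  fixes A B :: real
  shows "(\<lambda>x. if x < 1 then A else B / x^3) integrable_on {0<..}"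
proof -
  have "(\<lambda>x. A) integrable_on cbox 0 (1::real)" using integrable_const_ivl[of A 0 "1::real"] by (simp add: cbox_interval)
  then have "(\<lambda>x. A) integrable_on box 0 (1::real)" by (simp only: integrable_on_open_interval)
  then have "(\<lambda>x. A) integrable_on {0<..<1::real}" by (simp add: box_real)
  then have i1: "(\<lambda>x. if x < 1 then A else B / x^3) integrable_on {0<..<1::real}"
    by (rule integrable_eq) auto
  have "(\<lambda>x::real. 1 / x^3) integrable_on {1..}"
    using has_integral_inverse_power_to_inf[of 3 1] unfolding integrable_on_def by auto
  then have "(\<lambda>x::real. B * (1 / x^3)) integrable_on {1..}"
    using integrable_on_cmult_left[of "\<lambda>x::real. 1/x^3" "{1..}" B] by simp
  then have i2: "(\<lambda>x. if x < 1 then A else B / x^3) integrable_on {1::real..}"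
    by (rule integrable_eq) auto
  have "(\<lambda>x. if x < 1 then A else B / x^3) integrable_on ({0<..<1::real} \<union> {1..})"
  proof (rule integrable_Un[OF _ i1 i2])
    have "{0<..<1::real} \<inter> {1..} = {}" by auto
    then show "negligible ({0<..<1::real} \<inter> {1..})" by simp
  qed
  moreover have "{0<..<1::real} \<union> {1..} = {0<..}" by auto
  ultimately show ?thesis by simp
qed

lemma G_bound:
  fixes s R l c rho :: real and n :: nat
  assumes s0: "s > 0" and Rs: "R \<ge> s" and l: "l > 0" and c: "c > 0" and rho: "rho > 0" and n: "n \<ge> 1"
    and hk: "rho^2*c^2/4 \<le> R^2/l^2 + 1"
  shows "rho/(R^n*R^3) \<le> (if rho < 1 then 1/(s^n* s^3) else (4*(1/l^2 + 1/s^2)/c^2)^2/(s^(n-1)*rho^3))"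
proof -
  define g where "g = 4*(1/l^2 + 1/s^2)/c^2"
  have R0: "R > 0" using s0 Rs by linarith
  have g0: "g > 0" unfolding g_def using l s0 c by (intro divide_pos_pos add_pos_pos mult_pos_pos) auto
  have sR: "s^n* s^3 \<le> R^n*R^3" using s0 Rs by (intro mult_mono power_mono) auto
  have A: "rho/(R^n*R^3) \<le> 1/(s^n* s^3)" if "rho < 1"
    by (rule frac_le) (use that rho s0 sR in auto)
  have "R^2/s^2 \<ge> 1" using s0 Rs by (simp add: power_mono)
  then have "R^2/l^2 + 1 \<le> R^2/l^2 + R^2/s^2" by simp
  also have "\<dots> = R^2 * (1/l^2 + 1/s^2)" by (simp add: distrib_left)
  finally have "rho^2*c^2/4 \<le> R^2 * (1/l^2 + 1/s^2)" using hk by linarith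
  then have hw: "rho^2*c^2/4 \<le> R^2 * (1/l^2 + 1/s^2)" .
  define W where "W = 1/l^2 + 1/s^2"
  have W0: "W > 0" unfolding W_def using l s0 by (intro add_pos_pos) auto
  have gW: "g = 4*W/c^2" unfolding g_def W_def ..
  have "rho^2/g = (rho^2*c^2/4)/W" unfolding gW using c W0 by (simp add: field_simps)
  also have "\<dots> \<le> R^2" using hw W0 unfolding W_def[symmetric] by (simp add: divide_le_eq)
  finally have rg: "rho^2/g \<le> R^2" .
  have "(rho^2/g)^2 \<le> (R^2)^2" using rg rho g0 by (intro power_mono) auto
  moreover have "s^(n-1) \<le> R^(n-1)" using s0 Rs by (intro power_mono) auto
  ultimately have "s^(n-1) * (rho^2/g)^2 \<le> R^(n-1) * (R^2)^2"
    using s0 R0 by (intro mult_mono) auto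
  also have "R^(n-1) * (R^2)^2 = R^n*R^3"
  proof -
    have "n = Suc (n-1)" using n by simp
    then have "R^n = R^(n-1) * R" by (metis power_Suc2)
    then show ?thesis by (simp add: power2_eq_square power3_eq_cube)
  qed
  finally have b: "s^(n-1) * (rho^2/g)^2 \<le> R^n*R^3" .
  have B: "rho/(R^n*R^3) \<le> g^2/(s^(n-1)*rho^3)"
  proof -
    have "rho/(R^n*R^3) \<le> rho/(s^(n-1) * (rho^2/g)^2)"
      by (rule divide_left_mono[OF b]) (use rho s0 g0 R0 in auto)
    also have "\<dots> = g^2/(s^(n-1)*rho^3)" using rho g0 s0 by (simp add: field_simps power2_eq_square power3_eq_cube)
    finally show ?thesis .
  qed
  show ?thesis using A B unfolding g_def by auto
qed



lemma integrand_cont: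
  assumes "n \<ge> 2" "l > 0" "K \<in> {-1,0,1}" "mu > alow n l K"
  shows "continuous_on {0<..} (\<lambda>rho. var_norm_sq n l K mu rho * vol_density n l K mu rho)"
proof -
  have Rc: "continuous_on {0<..} (\<lambda>x. kr_of_rho n l K mu x)"
    by (rule continuous_at_imp_continuous_on) (use R_cont[OF assms] in auto)
  have R0: "\<forall>x\<in>{0<..}. kr_of_rho n l K mu x \<noteq> 0"
  proof
    fix x :: real assume "x \<in> {0<..}" then show "kr_of_rho n l K mu x \<noteq> 0" using R_pos[OF assms, of x] by simp
  qed
  have D0: "\<forall>x\<in>{0<..}. dk n l mu (kr_of_rho n l K mu x) \<noteq> 0"
  proof
    fix x :: real assume "x \<in> {0<..}" then show "dk n l mu (kr_of_rho n l K mu x) \<noteq> 0" using D_pos[OF assms, of x] by simp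
  qed
  have c0: "fp0 n l K mu \<noteq> 0" using fp0_eq(3)[OF assms] by simp
  have Dc: "continuous_on {0<..} (\<lambda>x. dk n l mu (kr_of_rho n l K mu x))"
    unfolding dk_def by (intro continuous_intros Rc) (use R0 assms(2) in auto)
  have Rpc: "continuous_on {0<..} (\<lambda>x. Rp n l K mu x)"
    unfolding Rp_def Let_def by (intro continuous_intros Rc Dc) (use R0 D0 in auto)
  have DDpc: "continuous_on {0<..} (\<lambda>x. DDp n l K mu x)"
    unfolding DDp_def Let_def by (intro continuous_intros Rc Rpc) (use R0 assms(2) in auto)
  let ?E = "\<lambda>rho. ((2*deriv (fp0 n l K) mu/fp0 n l K mu - 2*DDp n l K mu rho/dk n l mu (kr_of_rho n l K mu rho))^2
      + real n * (2*Rp n l K mu rho/kr_of_rho n l K mu rho)^2)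
      * (rho * (fp0 n l K mu/dk n l mu (kr_of_rho n l K mu rho)) * (kr_of_rho n l K mu rho)^n)"
  have Ec: "continuous_on {0<..} ?E"
    by (intro continuous_intros Rc Dc Rpc DDpc) (use R0 D0 c0 in auto)
  have eq: "?E x = var_norm_sq n l K mu x * vol_density n l K mu x" if "x \<in> {0<..}" for x
    using integrand_eq[OF assms, of x] that by simp
  show ?thesis by (rule continuous_on_eq[OF Ec eq])
qed



lemma L2_crit:
  assumes "n \<ge> 2" "l > 0" "K \<in> {-1,0,1}" "mu > alow n l K" and c'0: "deriv (fp0 n l K) mu = 0"
  shows "variation_L2 n l K mu"
proof -
  have K1: "K = 1" using part23(1)[OF assms(1-4)] c'0 by simp
  have mu0: "mu > 0" using assms(4) K1 unfolding alow_def by simp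
  define c where "c = fp0 n l K mu"
  define s where "s = kr0 n l K mu"
  have c0: "c > 0" using fp0_eq(3)[OF assms(1-4)] c_def by simp
  have s0: "s > 0" using kr0_props(3)[OF assms(1-4)] s_def by simp
  define C1 where "C1 = 2*real n + 2*real n*(real n - 1)*mu*l^2/s^(n+1)"
  define C2 where "C2 = (C1^2 + 4*real n) * l^6 * c / 2"
  define A where "A = C2 * (1/(s^n * s^3))"
  define B where "B = C2 * (4*(1/l^2 + 1/s^2)/c^2)^2/s^(n-1)"
  have C20: "C2 \<ge> 0" unfolding C2_def using c0 by simp
  define F where "F = (\<lambda>rho. var_norm_sq n l K mu rho * vol_density n l K mu rho)"
  define G where "G = (\<lambda>x::real. if x < 1 then A else B / x^3)"
  have bound: "\<bar>F x\<bar> \<le> G x" if x: "x \<in> {0<..}" for x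
  proof -
    have rho: "x > 0" using x by simp
    define R where "R = kr_of_rho n l K mu x"
    define D where "D = dk n l mu R"
    have Rs: "R \<ge> s" using kr_of_rho_props(1)[OF assms(1-4) less_imp_le[OF rho]] R_def s_def by simp
    have Fe: "F x = ((2*DDp n l K mu x/D)^2 + real n * (2*Rp n l K mu x/R)^2) * (x * (c/D) * R^n)"
      unfolding F_def using integrand_eq[OF assms(1-4) rho] c'0 unfolding R_def D_def c_def by simp
    have F0: "F x \<ge> 0" unfolding F_def
      using integrand_nonneg[of x n l K mu] R_pos[OF assms(1-4) less_imp_le[OF rho]] rho by simp
    have U: "F x \<le> C2 * (x / (R^n * R^3))"
      unfolding Fe C2_def C1_def
    proof (rule upper_alg[OF s0 Rs assms(2) less_imp_le[OF mu0] c0 rho assms(1)])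
      show "D = 2 * R / l\<^sup>2 + 2 * (real n - 1) * mu / R ^ n" unfolding D_def dk_def ..
      show "Rp n l K mu x = 2 / R ^ (n - 1) / D" unfolding Rp_def Let_def R_def D_def c'0 by simp
      show "DDp n l K mu x = 2 * Rp n l K mu x / l\<^sup>2 + 2 * (real n - 1) / R ^ n -
        2 * real n * (real n - 1) * mu * Rp n l K mu x / R ^ (n + 1)"
        unfolding DDp_def Let_def R_def ..
    qed
    have kfe: "kf n l K mu R = x^2*c^2/4" using kf_at_R[OF assms(1-4) less_imp_le[OF rho]] R_def c_def by simp
    have R0: "R > 0" using Rs s0 by linarith
    have "2*mu/R^(n-1) \<ge> 0" using mu0 R0 by simp
    then have hk: "x^2*c^2/4 \<le> R^2/l^2 + 1" using kfe K1 unfolding kf_def by simp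
    have GB: "x/(R^n*R^3) \<le> (if x < 1 then 1/(s^n * s^3) else (4*(1/l^2 + 1/s^2)/c^2)^2/(s^(n-1)*x^3))"
      by (rule G_bound[OF s0 Rs assms(2) c0 rho _ hk]) (use assms(1) in simp)
    have "C2 * (x / (R^n * R^3)) \<le> C2 * (if x < 1 then 1/(s^n * s^3) else (4*(1/l^2 + 1/s^2)/c^2)^2/(s^(n-1)*x^3))"
      using GB C20 by (rule mult_left_mono)
    also have "\<dots> = G x"
    proof (cases "x < 1")
      case True then show ?thesis unfolding G_def A_def by simp
    next
      case False then show ?thesis unfolding G_def B_def by (simp add: divide_divide_eq_left mult.assoc)
    qed
    finally show ?thesis using U F0 by simp
  qed
  have meas: "F \<in> borel_measurable (lebesgue_on {0<..})"
    unfolding F_def by (rule continuous_imp_measurable_on_sets_lebesgue[OF integrand_cont[OF assms(1-4)]]) simp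
  have "F integrable_on {0<..}"
    by (rule measurable_bounded_by_integrable_imp_integrable_real[OF meas _ bound]) (use G_int[of A B] G_def in auto)
  then show ?thesis unfolding variation_L2_def F_def .
qed


theorem mainTheorem3:
  fixes n :: nat and l :: real and K :: int and mu :: real
  assumes "n \<ge> 2" and "l > 0" and "K \<in> {-1, 0, 1}" and "admissible n l K mu"
  shows "(variation_L2 n l K mu \<longleftrightarrow> deriv (fp0 n l K) mu = 0)
    \<and> (deriv (fp0 n l K) mu = 0 \<longleftrightarrow> K = 1 \<and> mu = mu_crit n l)
    \<and> (K = 1 \<longrightarrow> (mu = mu_crit n l \<longleftrightarrow> kr0 n l K mu = l * sqrt ((real n - 1) / (real n + 1))))
    \<and> (K \<in> {0, -1} \<longrightarrow> \<not> variation_L2 n l K mu)"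
proof -
  have adm: "mu > alow n l K" using adm_iff[OF assms(3)] assms(4) by simp
  note P = part23[OF assms(1-3) adm]
  have L: "variation_L2 n l K mu \<longleftrightarrow> deriv (fp0 n l K) mu = 0"
    using L2_crit[OF assms(1-3) adm] not_L2[OF assms(1-3) adm] by blast
  show ?thesis using L P by auto
qed

end
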